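(* If $\succ=(\succ_s)_{s\in S}$ is a priority profile in which every $\succ_s$ is acyclic, then the set $f^\succ$ of student optimal stable matchings for $\succ$ is nonempty (in particular the set $\mathcal{S}^\succ$ of stable matchings for $\succ$ is nonempty).
   Context: A binary relation $B$ on $X$ is asymmetric if $(x,y)\in B$ implies $(y,x)\notin B$; acyclic if for all $K\ge2$ and $x_0,\dots,x_K\in X$, [$(x_{k-1},x_k)\in B$ and $(x_k,x_{k-1})\notin B$ for all $k$] implies $(x_K,x_0)\notin B$. School choice setup: $I$ is a finite set of students with $|I|\ge 3$, $S$ a finite set of schools. Each student $i$ has a total order $P_i$ on $S\cup\{\emptyset\}$; $sR_is'$ means $sP_is'$ or $s=s'$. Each school $s$ has capacity $q_s\in\mathbb{Z}_{++}$ and an asymmetric priority relation $\succ_s$ on $I$. A matching $\mu$ assigns each $i$ to $\mu(i)\in S\cup\{\emptyset\}$, $\mu(s)=\{i:\mu(i)=s\}$, $|\mu(s)|\le q_s$. $\mu$ is stable for $\succ$ if it is individually rational ($\mu(i)R_i\emptyset$ for all $i$), non-wasteful ($sP_i\mu(i)$ implies $|\mu(s)|=q_s$) and fair (no $s$, $j\in\mu(s)$, $i\notin\mu(s)$ with $sR_i\mu(i)$ and $(i,j)\in\succ_s$). $\mu$ is Pareto dominated by $\mu'$ if $\mu'(i)R_i\mu(i)$ for all $i$ and $\mu'(i)P_i\mu(i)$ for some $i$. A student optimal stable matching (SOSM) for $\succ$ is a stable matching for $\succ$ not Pareto dominated by any stable matching for $\succ$; $\mathcal{S}^\succ$ and $f^\succ\subseteq\mathcal{S}^\succ$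 denote the sets of stable matchings and SOSMs for $\succ$. *)

theory Defs
  imports Main
begin

text \<open>Students have type 'i (carrier set I), schools type 's (carrier set S).
  The outside option (being unassigned) is None; school s is Some s.\<close>

definition acyclic_rel_on :: "'a set \<Rightarrow> 'a rel \<Rightarrow> bool" where
  "acyclic_rel_on X B \<longleftrightarrow>
     (\<forall>K::nat. \<forall>x::nat \<Rightarrow> 'a. K \<ge> 2 \<longrightarrow> (\<forall>k\<le>K. x k \<in> X) \<longrightarrow>
        (\<forall>k\<in>{1..K}. (x (k-1), x k) \<in> B \<and> (x k, x (k-1)) \<notin> B) \<longrightarrow>
        (x K, x 0) \<notin> B)"

definition weakpref :: "('s option) rel \<Rightarrow> 's option \<Rightarrow> 's option \<Rightarrow> bool" where
  "weakpref P a b \<longleftrightarrow> (a, b) \<in> P \<or> a = b"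

definition is_matching :: "'i set \<Rightarrow> 's set \<Rightarrow> ('s \<Rightarrow> nat) \<Rightarrow> ('i \<Rightarrow> 's option) \<Rightarrow> bool" where
  "is_matching I S q \<mu> \<longleftrightarrow>
     (\<forall>i\<in>I. \<mu> i \<in> insert None (Some ` S)) \<and>
     (\<forall>i. i \<notin> I \<longrightarrow> \<mu> i = None) \<and>
     (\<forall>s\<in>S. card {i\<in>I. \<mu> i = Some s} \<le> q s)"

definition stable :: "'i set \<Rightarrow> 's set \<Rightarrow> ('i \<Rightarrow> ('s option) rel) \<Rightarrow> ('s \<Rightarrow> nat)
    \<Rightarrow> ('s \<Rightarrow> 'i rel) \<Rightarrow> ('i \<Rightarrow> 's option) \<Rightarrow> bool" where
  "stable I S P q pri \<mu> \<longleftrightarrow>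
     is_matching I S q \<mu> \<and>
     (\<forall>i\<in>I. weakpref (P i) (\<mu> i) None) \<and>
     (\<forall>i\<in>I. \<forall>s\<in>S. (Some s, \<mu> i) \<in> P i \<longrightarrow> card {j\<in>I. \<mu> j = Some s} = q s) \<and>
     \<not> (\<exists>s\<in>S. \<exists>j\<in>I. \<exists>i\<in>I. \<mu> j = Some s \<and> \<mu> i \<noteq> Some s \<and>
            weakpref (P i) (Some s) (\<mu> i) \<and> (i, j) \<in> pri s)"

definition pareto_dominates :: "'i set \<Rightarrow> ('i \<Rightarrow> ('s option) rel)
    \<Rightarrow> ('i \<Rightarrow> 's option) \<Rightarrow> ('i \<Rightarrow> 's option) \<Rightarrow> bool" where
  "pareto_dominates I P \<mu>' \<mu> \<longleftrightarrow>
     (\<forall>i\<in>I. weakpref (P i) (\<mu>' i) (\<mu> i)) \<and> (\<exists>i\<in>I. (\<mu>' i, \<mu> i) \<in> P i)"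

definition stable_set where
  "stable_set I S P q pri = {\<mu>. stable I S P q pri \<mu>}"

definition SOSM_set where
  "SOSM_set I S P q pri =
     {\<mu> \<in> stable_set I S P q pri. \<not> (\<exists>\<mu>'\<in>stable_set I S P q pri. pareto_dominates I P \<mu>' \<mu>)}"

end

theory Submission
  imports Defs
begin

lemma exists_max_nat:
  assumes "x0 \<in> X" "\<forall>x\<in>X. g x \<le> (B::nat)"
  shows "\<exists>x\<in>X. \<forall>y\<in>X. g y \<le> g x"
proof -
  have "g ` X \<subseteq> {..B}" using assms(2) by blast
  then have fin: "finite (g`X)" using finite_subset by blast
  have "Max (g`X) \<in> g`X" using fin assms(1) by (intro Max_in) auto
  then obtain x where x: "x\<in>X" "g x = Max (g`X)" by (metis imageE)
  show ?thesis
  proof (intro bexI ballI)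
    fix y assume "y \<in> X"
    then show "g y \<le> g x" using fin x(2) by simp
  qed (rule x(1))
qed

lemma rank_ext:
  assumes "finite A" "acyclic r" "finite r"
  shows "\<exists>f::'a\<Rightarrow>nat. inj_on f A \<and> (\<forall>x\<in>A. \<forall>y\<in>A. (x,y)\<in>r \<longrightarrow> f y < f x)"
  using assms(1)
proof (induction "card A" arbitrary: A)
  case 0
  then have "A = {}" by simp
  then show ?case by simp
next
  case (Suc n)
  then have "A \<noteq> {}" by auto
  have wf: "wf (r\<inverse>)" using finite_acyclic_wf_converse assms(2,3) by blast
  obtain m where m: "m \<in> A" "\<And>y. (y, m) \<in> r\<inverse> \<Longrightarrow> y \<notin> A"
    using wfE_min'[OF wf \<open>A \<noteq> {}\<close>] by blast
  have "card (A - {m}) = n" using Suc.hyps(2) m(1) Suc.prems by simp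
  moreover have "finite (A - {m})" using Suc.prems by simp
  ultimately have "\<exists>f::'a\<Rightarrow>nat. inj_on f (A - {m}) \<and> (\<forall>x\<in>A-{m}. \<forall>y\<in>A-{m}. (x,y)\<in>r \<longrightarrow> f y < f x)"
    using Suc.hyps(1)[of "A - {m}"] by simp
  then obtain f::"'a\<Rightarrow>nat" where f: "inj_on f (A - {m})" "\<forall>x\<in>A-{m}. \<forall>y\<in>A-{m}. (x,y)\<in>r \<longrightarrow> f y < f x"
    by blast
  define g where "g x = (if x = m then 0 else Suc (f x))" for x
  have "inj_on g A"
  proof (rule inj_onI)
    fix x y assume "x \<in> A" "y \<in> A" "g x = g y"
    then show "x = y" using f(1) unfolding g_def inj_on_def by (auto split: if_splits)
  qed
  moreover have "\<forall>x\<in>A. \<forall>y\<in>A. (x,y)\<in>r \<longrightarrow> g y < g x"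
  proof (intro ballI impI)
    fix x y assume xy: "x \<in> A" "y \<in> A" "(x,y) \<in> r"
    then have "x \<noteq> m" using m(2) by blast
    then show "g y < g x" using f(2) xy unfolding g_def by auto
  qed
  ultimately show ?case by blast
qed

lemma acyc:
  assumes "asym_on I B" "B \<subseteq> I\<times>I" "acyclic_rel_on I B"
  shows "acyclic B"
  unfolding acyclic_def
proof
  fix x show "(x,x) \<notin> B\<^sup>+"
  proof
    assume "(x,x) \<in> B\<^sup>+"
    then obtain n where n: "n > 0" "(x,x) \<in> B ^^ n" using trancl_power by blast
    then obtain f where f: "f 0 = x" "f n = x" "\<forall>i<n. (f i, f (Suc i)) \<in> B"
      using relpow_fun_conv by metis
    have inI: "\<forall>k<n. f k \<in> I" using f(3) assms(2) by blast
    consider "n = 1" | "n = 2" | "n \<ge> 3" using n by linarith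
    then show False
    proof cases
      case 1
      then have "(x,x) \<in> B" using f by (metis One_nat_def lessI)
      moreover have "x \<in> I" using inI f n by auto
      ultimately show ?thesis using assms(1) unfolding asym_on_def by blast
    next
      case 2
      then have "(f 0, f 1) \<in> B" "(f 1, f 2) \<in> B" using f(3) by (auto simp: numeral_2_eq_2)
      moreover have "f 1 \<in> I" "f 0 \<in> I" using inI 2 by auto
      ultimately show ?thesis using f 2 assms(1) unfolding asym_on_def by auto
    next
      case 3
      have "(f (n-1), f 0) \<notin> B"
        using assms(3) unfolding acyclic_rel_on_def
      proof (elim allE[of _ "n-1"] allE[of _ f] impE)
        show "2 \<le> n - 1" using 3 by simp
        show "\<forall>k\<le>n-1. f k \<in> I" using inI 3 by auto
        show "\<forall>k\<in>{1..n - 1}. (f (k - 1), f k) \<in> B \<and> (f k, f (k - 1)) \<notin> B"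
        proof
          fix k assume k: "k \<in> {1..n-1}"
          then have e: "(f (k - 1), f k) \<in> B" using f(3)[rule_format, of "k-1"] by auto
          moreover have "(f k, f (k - 1)) \<notin> B" using e assms(1) inI k unfolding asym_on_def by auto
          ultimately show "(f (k - 1), f k) \<in> B \<and> (f k, f (k - 1)) \<notin> B" by blast
        qed
      qed
      moreover have "(f (n-1), f n) \<in> B" using f(3)[rule_format, of "n-1"] 3 by auto
      ultimately show ?thesis using f by simp
    qed
  qed
qed

lemma exists_best:
  assumes "strict_linear_order_on Ob r" "finite A" "A \<noteq> {}" "A \<subseteq> Ob"
  shows "\<exists>x\<in>A. \<forall>y\<in>A. y \<noteq> x \<longrightarrow> (x,y) \<in> r"
  using assms(2,3,4)
proof (induction A rule: finite_ne_induct)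
  case (singleton x)
  then show ?case by auto
next
  case (insert a F)
  then have "\<exists>x\<in>F. \<forall>y\<in>F. y \<noteq> x \<longrightarrow> (x,y) \<in> r" by simp
  then obtain x where x: "x\<in>F" "\<forall>y\<in>F. y \<noteq> x \<longrightarrow> (x,y) \<in> r" by (rule bexE)
  have tr: "trans r" and tot: "total_on Ob r" using assms(1) unfolding strict_linear_order_on_def by auto
  show ?case
  proof (cases "(a,x) \<in> r")
    case True
    have "\<forall>y\<in>insert a F. y \<noteq> a \<longrightarrow> (a,y) \<in> r"
    proof (intro ballI impI)
      fix y assume y: "y \<in> insert a F" "y \<noteq> a"
      then have yF: "y \<in> F" by simp
      show "(a,y) \<in> r"
      proof (cases "y = x")
        case True then show ?thesis using \<open>(a,x) \<in> r\<close> by simp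
      next
        case False then have "(x,y) \<in> r" using x yF by simp
        then show ?thesis by (rule transD[OF tr \<open>(a,x) \<in> r\<close>])
      qed
    qed
    then show ?thesis by simp
  next
    case False
    have "a \<noteq> x" using insert.hyps x(1) by auto
    moreover have "a \<in> Ob" "x \<in> Ob" using insert.prems x(1) by auto
    ultimately have "(x,a) \<in> r" using tot False unfolding total_on_def by metis
    then have "\<forall>y\<in>insert a F. y \<noteq> x \<longrightarrow> (x,y) \<in> r" using x by simp
    then show ?thesis using x(1) by auto
  qed
qed


definition avail :: "'s set \<Rightarrow> 's set \<Rightarrow> 's option set" where
  "avail S R = insert None (Some ` (S - R))"
definition best :: "'s option rel \<Rightarrow> 's set \<Rightarrow> 's set \<Rightarrow> 's option" where
  "best Pi S R = (SOME x. x \<in> avail S R \<and> (\<forall>y\<in>avail S R. y\<noteq>x \<longrightarrow> (x,y) \<in> Pi))"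
definition props where
  "props I P S R s = {i\<in>I. best (P i) S (R i) = Some s}"
definition Inv where
  "Inv I S P q (f :: 's \<Rightarrow> 'i \<Rightarrow> nat) R \<longleftrightarrow> (\<forall>i\<in>I. R i \<subseteq> S) \<and>
     (\<forall>i\<in>I. \<forall>s\<in>R i. q s \<le> card {k\<in>props I P S R s. f s i < f s k})"

lemma best_prop:
  assumes "strict_linear_order_on (insert None (Some ` S)) Pi" "finite S"
  shows "best Pi S R \<in> avail S R \<and> (\<forall>y\<in>avail S R. y \<noteq> best Pi S R \<longrightarrow> (best Pi S R, y) \<in> Pi)"
proof -
  have "\<exists>x\<in>avail S R. \<forall>y\<in>avail S R. y \<noteq> x \<longrightarrow> (x,y) \<in> Pi"
  proof (rule exists_best[OF assms(1)])
    show "finite (avail S R)" using assms(2) unfolding avail_def by simp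
    show "avail S R \<noteq> {}" unfolding avail_def by simp
    show "avail S R \<subseteq> insert None (Some ` S)" unfolding avail_def by auto
  qed
  then obtain x where "x \<in> avail S R \<and> (\<forall>y\<in>avail S R. y \<noteq> x \<longrightarrow> (x,y) \<in> Pi)" by blast
  then show ?thesis unfolding best_def by (rule someI)
qed

lemma stable_exists:
  fixes I :: "'i set" and S :: "'s set" and P :: "'i \<Rightarrow> ('s option) rel"
    and q :: "'s \<Rightarrow> nat" and pri :: "'s \<Rightarrow> 'i rel" and f :: "'s \<Rightarrow> 'i \<Rightarrow> nat"
  assumes finI: "finite I" and finS: "finite S"
    and lin: "\<forall>i\<in>I. strict_linear_order_on (insert None (Some ` S)) (P i)"
    and inj: "\<forall>s\<in>S. inj_on (f s) I"
    and ext: "\<forall>s\<in>S. \<forall>i\<in>I. \<forall>j\<in>I. (i,j) \<in> pri s \<longrightarrow> f s j < f s i"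
  shows "\<exists>\<mu>. stable I S P q pri \<mu>"
proof -
  have bp: "best (P i) S Rs \<in> avail S Rs \<and> (\<forall>y\<in>avail S Rs. y \<noteq> best (P i) S Rs \<longrightarrow> (best (P i) S Rs, y) \<in> P i)"
    if "i \<in> I" for i Rs
    by (rule best_prop[OF lin[rule_format, OF that] finS])
  have irr: "(x,x) \<notin> P i" if "i \<in> I" for i x
    using lin[rule_format, OF that] unfolding strict_linear_order_on_def by (simp add: irreflD)
  have trP: "trans (P i)" if "i \<in> I" for i
    using lin[rule_format, OF that] unfolding strict_linear_order_on_def by simp
  have finprops: "finite (props I P S Rs s)" for Rs s
    unfolding props_def using finI by simp
  define msr where "msr Rs = (\<Sum>i\<in>I. card (Rs i))" for Rs :: "'i \<Rightarrow> 's set"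
  have Inv0: "Inv I S P q f (\<lambda>_. {})" by (simp add: Inv_def)
  have bound: "\<forall>Rs\<in>{Rs. Inv I S P q f Rs}. msr Rs \<le> card I * card S"
  proof
    fix Rs assume "Rs \<in> {Rs. Inv I S P q f Rs}"
    then have sub: "\<forall>i\<in>I. Rs i \<subseteq> S" unfolding Inv_def by simp
    have "msr Rs \<le> (\<Sum>i\<in>I. card S)" unfolding msr_def
      by (rule sum_mono) (use sub finS in \<open>simp add: card_mono\<close>)
    then show "msr Rs \<le> card I * card S" by simp
  qed
  obtain R where R: "Inv I S P q f R" and Rmax: "\<forall>Rs\<in>{Rs. Inv I S P q f Rs}. msr Rs \<le> msr R"
    using exists_max_nat[of "\<lambda>_. {}" "{Rs. Inv I S P q f Rs}" msr "card I * card S"] Inv0 bound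
    by auto
  have RS: "\<forall>i\<in>I. R i \<subseteq> S" and RX: "\<forall>i\<in>I. \<forall>s\<in>R i. q s \<le> card {k\<in>props I P S R s. f s i < f s k}"
    using R unfolding Inv_def by auto
  have notR: "s \<notin> R i" if "i \<in> I" "best (P i) S (R i) = Some s" for i s
    using bp[of i "R i"] that unfolding avail_def by auto
  have full: "card (props I P S R s) \<le> q s" if sS: "s \<in> S" for s
  proof (rule ccontr)
    assume "\<not> card (props I P S R s) \<le> q s"
    then have big: "card (props I P S R s) > q s" by simp
    define Pr where "Pr = props I P S R s"
    have finPr: "finite Pr" unfolding Pr_def by (rule finprops)
    have "Pr \<noteq> {}" using big unfolding Pr_def by auto
    then have "Min (f s ` Pr) \<in> f s ` Pr" using finPr by (intro Min_in) auto
    then obtain j where j: "j \<in> Pr" "f s j = Min (f s ` Pr)" by (metis imageE)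
    have jmin: "f s j \<le> f s k" if "k \<in> Pr" for k
      using that finPr j(2) by simp
    have jI: "j \<in> I" and jb: "best (P j) S (R j) = Some s" using j(1) unfolding Pr_def props_def by auto
    have sRj: "s \<notin> R j" by (rule notR[OF jI jb])
    have PrI: "Pr \<subseteq> I" unfolding Pr_def props_def by auto
    have jstrict: "f s j < f s k" if "k \<in> Pr" "k \<noteq> j" for k
    proof -
      have "k \<in> I" using that(1) PrI by auto
      then have "f s j \<noteq> f s k" using inj_onD[OF inj[rule_format, OF sS] _ jI \<open>k \<in> I\<close>] that(2) by metis
      then show ?thesis using jmin[OF that(1)] by simp
    qed
    define R' where "R' = R(j := insert s (R j))"
    have bj': "best (P j) S (R' j) \<noteq> Some s"
      using bp[of j "R' j"] jI unfolding avail_def R'_def by auto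
    have c1: "props I P S R s' \<subseteq> props I P S R' s'" if "s' \<noteq> s" for s'
    proof
      fix k assume k: "k \<in> props I P S R s'"
      then have "k \<noteq> j" using jb that unfolding props_def by auto
      then show "k \<in> props I P S R' s'" using k unfolding props_def R'_def by auto
    qed
    have c2: "props I P S R' s = Pr - {j}"
    proof
      show "props I P S R' s \<subseteq> Pr - {j}"
      proof
        fix k assume k: "k \<in> props I P S R' s"
        then have "k \<noteq> j" using bj' unfolding props_def by auto
        then show "k \<in> Pr - {j}" using k unfolding Pr_def props_def R'_def by auto
      qed
      show "Pr - {j} \<subseteq> props I P S R' s"
        unfolding Pr_def props_def R'_def by auto
    qed
    have cardPr: "q s \<le> card (Pr - {j})" using big j(1) finPr unfolding Pr_def[symmetric] by simp
    have InvR': "Inv I S P q f R'"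
      unfolding Inv_def
    proof (intro conjI ballI)
      fix i assume "i \<in> I" then show "R' i \<subseteq> S" using RS sS unfolding R'_def by auto
    next
      fix i s' assume i: "i \<in> I" and s': "s' \<in> R' i"
      show "q s' \<le> card {k\<in>props I P S R' s'. f s' i < f s' k}"
      proof (cases "s' = s")
        case False
        then have "s' \<in> R i" using s' unfolding R'_def by (auto split: if_splits)
        then have "q s' \<le> card {k\<in>props I P S R s'. f s' i < f s' k}" by (rule RX[rule_format, OF i])
        also have "\<dots> \<le> card {k\<in>props I P S R' s'. f s' i < f s' k}"
          by (rule card_mono) (use finprops c1[OF False] in auto)
        finally show ?thesis .
      next
        case True
        show ?thesis
        proof (cases "i = j")
          case True
          have "{k\<in>props I P S R' s'. f s' i < f s' k} = Pr - {j}"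
            using c2 jstrict \<open>s' = s\<close> True by auto
          then show ?thesis using cardPr \<open>s' = s\<close> by simp
        next
          case False
          then have sRi: "s \<in> R i" using s' True unfolding R'_def by auto
          define X where "X = {k\<in>Pr. f s i < f s k}"
          have X: "q s \<le> card X" using RX[rule_format, OF i sRi] unfolding X_def Pr_def by simp
          have eq: "{k\<in>props I P S R' s'. f s' i < f s' k} = X - {j}"
            using c2 True unfolding X_def by auto
          have "q s \<le> card (X - {j})"
          proof (cases "j \<in> X")
            case False then show ?thesis using X by simp
          next
            case True
            then have "f s i < f s j" unfolding X_def by simp
            then have "X = Pr" unfolding X_def using jmin by fastforce
            then show ?thesis using cardPr by simp
          qed
          then show ?thesis using eq True by simp
        qed
      qed
    qed
    have finRj: "finite (R j)" using RS jI finS finite_subset by blast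
    have "msr R' = card (R' j) + (\<Sum>i\<in>I-{j}. card (R' i))"
      unfolding msr_def using finI jI by (simp add: sum.remove)
    also have "(\<Sum>i\<in>I-{j}. card (R' i)) = (\<Sum>i\<in>I-{j}. card (R i))"
      unfolding R'_def by (rule sum.cong) auto
    also have "card (R' j) = Suc (card (R j))" unfolding R'_def using finRj sRj by simp
    also have "Suc (card (R j)) + (\<Sum>i\<in>I-{j}. card (R i)) = Suc (msr R)"
      unfolding msr_def using finI jI by (simp add: sum.remove)
    finally have "msr R' = Suc (msr R)" .
    moreover have "msr R' \<le> msr R" using Rmax InvR' by simp
    ultimately show False by simp
  qed
  define \<mu> where "\<mu> i = (if i \<in> I then best (P i) S (R i) else None)" for i
  have mset: "{j\<in>I. \<mu> j = Some s} = props I P S R s" for s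
    unfolding props_def \<mu>_def by auto
  have inR: "s \<in> R i" if i: "i \<in> I" and s: "s \<in> S" and pr: "(Some s, \<mu> i) \<in> P i" for i s
  proof (rule ccontr)
    assume "s \<notin> R i"
    then have av: "Some s \<in> avail S (R i)" using s unfolding avail_def by auto
    have mi: "\<mu> i = best (P i) S (R i)" using i unfolding \<mu>_def by simp
    have ne: "Some s \<noteq> \<mu> i" using pr irr[OF i] by auto
    then have "(\<mu> i, Some s) \<in> P i" using bp[OF i, of "R i"] av mi by auto
    then have "(Some s, Some s) \<in> P i" using transD[OF trP[OF i] pr] by simp
    then show False using irr[OF i] by simp
  qed
  have "stable I S P q pri \<mu>"
    unfolding stable_def
  proof (intro conjI)
    show "is_matching I S q \<mu>"
      unfolding is_matching_def
    proof (intro conjI ballI allI impI)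
      fix i assume i: "i \<in> I"
      then show "\<mu> i \<in> insert None (Some ` S)"
        using bp[OF i, of "R i"] unfolding \<mu>_def avail_def by auto
    next
      fix i assume "i \<notin> I" then show "\<mu> i = None" unfolding \<mu>_def by simp
    next
      fix s assume "s \<in> S" then show "card {i\<in>I. \<mu> i = Some s} \<le> q s"
        using full mset by simp
    qed
    show "\<forall>i\<in>I. weakpref (P i) (\<mu> i) None"
    proof
      fix i assume i: "i \<in> I"
      have "None \<in> avail S (R i)" unfolding avail_def by simp
      then show "weakpref (P i) (\<mu> i) None"
        using bp[OF i, of "R i"] i unfolding weakpref_def \<mu>_def by auto
    qed
    show "\<forall>i\<in>I. \<forall>s\<in>S. (Some s, \<mu> i) \<in> P i \<longrightarrow> card {j\<in>I. \<mu> j = Some s} = q s"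
    proof (intro ballI impI)
      fix i s assume i: "i \<in> I" and s: "s \<in> S" and pr: "(Some s, \<mu> i) \<in> P i"
      have "s \<in> R i" by (rule inR[OF i s pr])
      then have "q s \<le> card {k\<in>props I P S R s. f s i < f s k}" by (rule RX[rule_format, OF i])
      also have "\<dots> \<le> card (props I P S R s)" by (rule card_mono) (use finprops in auto)
      finally show "card {j\<in>I. \<mu> j = Some s} = q s" using full[OF s] mset by simp
    qed
    show "\<not> (\<exists>s\<in>S. \<exists>j\<in>I. \<exists>i\<in>I. \<mu> j = Some s \<and> \<mu> i \<noteq> Some s \<and>
            weakpref (P i) (Some s) (\<mu> i) \<and> (i, j) \<in> pri s)"
    proof
      assume "\<exists>s\<in>S. \<exists>j\<in>I. \<exists>i\<in>I. \<mu> j = Some s \<and> \<mu> i \<noteq> Some s \<and>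
            weakpref (P i) (Some s) (\<mu> i) \<and> (i, j) \<in> pri s"
      then obtain s where s: "s \<in> S" and e1: "\<exists>j\<in>I. \<exists>i\<in>I. \<mu> j = Some s \<and> \<mu> i \<noteq> Some s \<and>
            weakpref (P i) (Some s) (\<mu> i) \<and> (i, j) \<in> pri s" by (rule bexE)
      obtain j where j: "j \<in> I" and e2: "\<exists>i\<in>I. \<mu> j = Some s \<and> \<mu> i \<noteq> Some s \<and>
            weakpref (P i) (Some s) (\<mu> i) \<and> (i, j) \<in> pri s" using e1 by (rule bexE)
      obtain i where i: "i \<in> I" and e3: "\<mu> j = Some s \<and> \<mu> i \<noteq> Some s \<and>
            weakpref (P i) (Some s) (\<mu> i) \<and> (i, j) \<in> pri s" using e2 by (rule bexE)
      from e3 have mj: "\<mu> j = Some s"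
        and mi: "\<mu> i \<noteq> Some s" and w: "weakpref (P i) (Some s) (\<mu> i)" and p: "(i, j) \<in> pri s"
        by simp_all
      have pr: "(Some s, \<mu> i) \<in> P i" using w mi unfolding weakpref_def by auto
      have "s \<in> R i" by (rule inR[OF i s pr])
      then have le: "q s \<le> card {k\<in>props I P S R s. f s i < f s k}" by (rule RX[rule_format, OF i])
      have sub: "{k\<in>props I P S R s. f s i < f s k} \<subseteq> props I P S R s" by auto
      have fp: "finite (props I P S R s)" by (rule finprops)
      have c1: "card (props I P S R s) \<le> card {k\<in>props I P S R s. f s i < f s k}"
        by (rule le_trans[OF full[OF s] le])
      have c2: "card {k\<in>props I P S R s. f s i < f s k} \<le> card (props I P S R s)"
        by (rule card_mono[OF fp sub])
      have eqX: "{k\<in>props I P S R s. f s i < f s k} = props I P S R s"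
        by (rule card_subset_eq[OF fp sub]) (rule antisym[OF c2 c1])
      have jp: "j \<in> props I P S R s" unfolding props_def using j mj unfolding \<mu>_def by (simp split: if_splits)
      have "j \<in> {k\<in>props I P S R s. f s i < f s k}" using jp eqX by (rule ssubst[rotated])
      then have "f s i < f s j" by simp
      moreover have "f s j < f s i" using ext[rule_format, OF s i j p] .
      ultimately show False by simp
    qed
  qed
  then show ?thesis by blast
qed

theorem corollary1:
  fixes I :: "'i set" and S :: "'s set"
    and P :: "'i \<Rightarrow> ('s option) rel" and q :: "'s \<Rightarrow> nat" and pri :: "'s \<Rightarrow> 'i rel"
  assumes "finite I" and "card I \<ge> 3" and "finite S"
    and "\<forall>i\<in>I. strict_linear_order_on (insert None (Some ` S)) (P i)
               \<and> P i \<subseteq> insert None (Some ` S) \<times> insert None (Some ` S)"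
    and "\<forall>s\<in>S. q s > 0"
    and "\<forall>s\<in>S. asym_on I (pri s) \<and> pri s \<subseteq> I \<times> I"
    and "\<forall>s\<in>S. acyclic_rel_on I (pri s)"
  shows "SOSM_set I S P q pri \<noteq> {} \<and> stable_set I S P q pri \<noteq> {}"
proof -
  note finI = assms(1) and finS = assms(3)
  define Ob where "Ob = insert None (Some ` S)"
  have lin: "\<forall>i\<in>I. strict_linear_order_on Ob (P i)" using assms(4) unfolding Ob_def by simp
  have Psub: "P i \<subseteq> Ob \<times> Ob" if "i \<in> I" for i using assms(4) that unfolding Ob_def by simp
  have "\<exists>g::'i\<Rightarrow>nat. inj_on g I \<and> (\<forall>x\<in>I. \<forall>y\<in>I. (x,y)\<in>pri s \<longrightarrow> g y < g x)" if s: "s \<in> S" for s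
  proof (rule rank_ext[OF finI])
    have a: "asym_on I (pri s)" and b: "pri s \<subseteq> I \<times> I" using assms(6) s by simp_all
    show "acyclic (pri s)" by (rule acyc[OF a b]) (use assms(7) s in simp)
    show "finite (pri s)" using b finI finite_subset by blast
  qed
  then have "\<forall>s\<in>S. \<exists>g::'i\<Rightarrow>nat. inj_on g I \<and> (\<forall>x\<in>I. \<forall>y\<in>I. (x,y)\<in>pri s \<longrightarrow> g y < g x)" by simp
  then have "\<exists>F::'s \<Rightarrow> 'i \<Rightarrow> nat. \<forall>s\<in>S. inj_on (F s) I \<and> (\<forall>x\<in>I. \<forall>y\<in>I. (x,y)\<in>pri s \<longrightarrow> F s y < F s x)"
    by (rule bchoice[where Q="\<lambda>s g. inj_on g I \<and> (\<forall>x\<in>I. \<forall>y\<in>I. (x,y)\<in>pri s \<longrightarrow> g y < g x)"])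
  then obtain F :: "'s \<Rightarrow> 'i \<Rightarrow> nat" where F: "\<forall>s\<in>S. inj_on (F s) I \<and> (\<forall>x\<in>I. \<forall>y\<in>I. (x,y)\<in>pri s \<longrightarrow> F s y < F s x)"
    by (rule exE)
  have "\<exists>\<mu>. stable I S P q pri \<mu>"
  proof (rule stable_exists[OF finI finS, of P F])
    show "\<forall>i\<in>I. strict_linear_order_on (insert None (Some ` S)) (P i)" using lin unfolding Ob_def .
    show "\<forall>s\<in>S. inj_on (F s) I" using F by simp
    show "\<forall>s\<in>S. \<forall>i\<in>I. \<forall>j\<in>I. (i, j) \<in> pri s \<longrightarrow> F s j < F s i" using F by simp
  qed
  then obtain \<mu>0 where mu0: "\<mu>0 \<in> stable_set I S P q pri" unfolding stable_set_def by auto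
  define rk where "rk i x = card {y\<in>Ob. (x,y) \<in> P i}" for i x
  define phi where "phi \<mu> = (\<Sum>i\<in>I. rk i (\<mu> i))" for \<mu> :: "'i \<Rightarrow> 's option"
  have finOb: "finite Ob" unfolding Ob_def using finS by simp
  have bnd: "\<forall>\<mu>\<in>stable_set I S P q pri. phi \<mu> \<le> card I * card Ob"
  proof
    fix \<mu> :: "'i \<Rightarrow> 's option"
    have "phi \<mu> \<le> (\<Sum>i\<in>I. card Ob)" unfolding phi_def rk_def
      by (rule sum_mono) (rule card_mono[OF finOb], auto)
    then show "phi \<mu> \<le> card I * card Ob" by simp
  qed
  obtain \<mu> where mu: "\<mu> \<in> stable_set I S P q pri" and mmax: "\<forall>\<nu>\<in>stable_set I S P q pri. phi \<nu> \<le> phi \<mu>"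
    using exists_max_nat[OF mu0 bnd] by (rule bexE)
  have strict: "phi \<mu> < phi \<nu>" if d: "pareto_dominates I P \<nu> \<mu>" for \<nu>
  proof -
    have w: "\<forall>i\<in>I. weakpref (P i) (\<nu> i) (\<mu> i)" and ex: "\<exists>i\<in>I. (\<nu> i, \<mu> i) \<in> P i"
      using d unfolding pareto_dominates_def by simp_all
    have subs: "{y\<in>Ob. (\<mu> i, y) \<in> P i} \<subseteq> {y\<in>Ob. (\<nu> i, y) \<in> P i}" if i: "i \<in> I" for i
    proof
      fix y assume y: "y \<in> {y\<in>Ob. (\<mu> i, y) \<in> P i}"
      have tr: "trans (P i)" using lin i unfolding strict_linear_order_on_def by simp
      have "(\<nu> i, \<mu> i) \<in> P i \<or> \<nu> i = \<mu> i" using w i unfolding weakpref_def by simp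
      then show "y \<in> {y\<in>Ob. (\<nu> i, y) \<in> P i}"
      proof
        assume a: "(\<nu> i, \<mu> i) \<in> P i"
        have "(\<mu> i, y) \<in> P i" using y by simp
        then have "(\<nu> i, y) \<in> P i" using transD[OF tr a] by simp
        then show ?thesis using y by simp
      next
        assume "\<nu> i = \<mu> i" then show ?thesis using y by simp
      qed
    qed
    show ?thesis unfolding phi_def
    proof (rule sum_strict_mono_ex1[OF finI])
      show "\<forall>i\<in>I. rk i (\<mu> i) \<le> rk i (\<nu> i)"
        unfolding rk_def using subs finOb by (simp add: card_mono)
      from ex obtain i where i: "i \<in> I" and a: "(\<nu> i, \<mu> i) \<in> P i" by (rule bexE)
      have irr: "(\<mu> i, \<mu> i) \<notin> P i" using lin i unfolding strict_linear_order_on_def by (simp add: irreflD)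
      have "\<mu> i \<in> Ob" using a Psub[OF i] by auto
      then have "\<mu> i \<in> {y\<in>Ob. (\<nu> i, y) \<in> P i} - {y\<in>Ob. (\<mu> i, y) \<in> P i}" using a irr by simp
      then have "{y\<in>Ob. (\<mu> i, y) \<in> P i} \<subset> {y\<in>Ob. (\<nu> i, y) \<in> P i}" using subs[OF i] by auto
      then have "rk i (\<mu> i) < rk i (\<nu> i)" unfolding rk_def by (rule psubset_card_mono[rotated]) (simp add: finOb)
      then show "\<exists>i\<in>I. rk i (\<mu> i) < rk i (\<nu> i)" using i by blast
    qed
  qed
  have "\<mu> \<in> SOSM_set I S P q pri"
    unfolding SOSM_set_def
  proof (intro CollectI conjI notI)
    show "\<mu> \<in> stable_set I S P q pri" by (rule mu)
    assume "\<exists>\<mu>'\<in>stable_set I S P q pri. pareto_dominates I P \<mu>' \<mu>"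
    then obtain \<nu> where nu: "\<nu> \<in> stable_set I S P q pri" and dd: "pareto_dominates I P \<nu> \<mu>" by (rule bexE)
    have "phi \<nu> \<le> phi \<mu>" using mmax nu by simp
    moreover have "phi \<mu> < phi \<nu>" by (rule strict[OF dd])
    ultimately show False by simp
  qed
  then show ?thesis using mu by auto
qed

end
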